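(* Let each directed channel of a fully connected network of $n$ processes be timely independently with the same probability $p<1$ (with $p>0$ fixed). In a multi-hop Omega implementation, a leader can exist only if some process has directed paths of timely channels to all other processes. Then the probability of leader existence in any multi-hop Omega implementation, i.e. the probability that there exists a process having a directed path of timely channels to every other process, approaches $1$ exponentially fast as $n\to\infty$.
   Context: A network has $n$ processes and a directed channel from every process to every other process. Each directed channel is timely with probability $p$, independently of all other channels. In a multi-hop implementation of the Omega failure detector, a message may reach its destination by being forwarded through intermediate processes, so a process can be the leader provided it has a timely directed path (a path all of whose channels are timely) to every other process. *)

theory Defs
  imports "HOL-Probability.Probability"
begin

definition channels :: "nat \<Rightarrow> (nat \<times> nat) set" where
  "channels n = {(i, j). i < n \<and> j < n \<and> i \<noteq> j}"

definition timeliness_dist :: "real \<Rightarrow> nat \<Rightarrow> (nat \<times> nat \<Rightarrow> bool) pmf" where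
  "timeliness_dist p n = Pi_pmf (channels n) False (\<lambda>_. bernoulli_pmf p)"

definition timely_channels :: "nat \<Rightarrow> (nat \<times> nat \<Rightarrow> bool) \<Rightarrow> (nat \<times> nat) set" where
  "timely_channels n t = {e \<in> channels n. t e}"

definition leader_exists :: "nat \<Rightarrow> (nat \<times> nat \<Rightarrow> bool) \<Rightarrow> bool" where
  "leader_exists n t \<longleftrightarrow>
     (\<exists>i<n. \<forall>j<n. j \<noteq> i \<longrightarrow> (i, j) \<in> (timely_channels n t)\<^sup>+)"

end

theory Submission
  imports Defs
begin

theorem theorem2:
  fixes p :: real
  assumes "0 < p" and "p < 1"
  shows "\<exists>C c. 0 < c \<and> c < 1 \<and>
           (\<forall>n. 1 - measure_pmf.prob (timeliness_dist p n) {t. leader_exists n t} \<le> C * c ^ n)"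
proof -
  have p: "0 \<le> p" "p \<le> 1" using assms by auto
  have prob_pair_product:
    "measure_pmf.prob (pair_pmf M N) (A \<times> B) = measure_pmf.prob M A * measure_pmf.prob N B"
    for M N :: "(nat \<times> nat \<Rightarrow> bool) pmf" and A B
  proof -
    have "measure_pmf.prob (pair_pmf M N) (A \<times> B) =
          measure_pmf.prob (pair_pmf M N) ((A \<times> B) \<inter> set_pmf (pair_pmf M N))"
      by (rule measure_Int_set_pmf[symmetric])
    also have "(A \<times> B) \<inter> set_pmf (pair_pmf M N) = (A \<inter> set_pmf M) \<times> (B \<inter> set_pmf N)" by auto
    also have "measure_pmf.prob (pair_pmf M N) \<dots> = measure_pmf.prob M (A \<inter> set_pmf M) * measure_pmf.prob N (B \<inter> set_pmf N)"
      by (rule measure_pmf_prob_product) auto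
    finally show ?thesis by (simp add: measure_Int_set_pmf)
  qed
  have pair_event: "finite K \<Longrightarrow> inj_on a K \<Longrightarrow> inj_on b K \<Longrightarrow> a ` K \<inter> b ` K = {} \<Longrightarrow>
    measure_pmf.prob (Pi_pmf (a ` K \<union> b ` K) False (\<lambda>_. bernoulli_pmf p))
           {t. \<forall>k\<in>K. \<not> (t (a k) \<and> t (b k))} = (1 - p^2) ^ card K"
    for K :: "nat set" and a b :: "nat \<Rightarrow> nat \<times> nat"
  proof (induction K rule: finite_induct)
    case empty
    then show ?case by simp
  next
    case (insert k K)
    define P where "P = {a k, b k}"
    define B where "B = a ` K \<union> b ` K"
    let ?D = "\<lambda>A. Pi_pmf A False (\<lambda>_. bernoulli_pmf p)"
    have ak: "a k \<notin> a ` K" "b k \<notin> b ` K" using insert by auto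
    have PB: "P \<inter> B = {}" using insert ak unfolding P_def B_def by auto
    have ab: "a k \<noteq> b k" using insert by auto
    have eq: "a ` insert k K \<union> b ` insert k K = P \<union> B" unfolding P_def B_def by auto
    have fin: "finite P" "finite B" using insert unfolding P_def B_def by auto
    have D: "?D (P \<union> B) = map_pmf (\<lambda>(f,g) x. if x \<in> P then f x else g x) (pair_pmf (?D P) (?D B))"
      by (rule Pi_pmf_union[OF fin PB])
    have pre: "(\<lambda>(f,g) x. if x \<in> P then f x else g x) -` {t. \<forall>k'\<in>insert k K. \<not> (t (a k') \<and> t (b k'))}
       = {f. \<not> (f (a k) \<and> f (b k))} \<times> {g. \<forall>k'\<in>K. \<not> (g (a k') \<and> g (b k'))}"
    proof -
      have "a k' \<notin> P" "b k' \<notin> P" if "k' \<in> K" for k' using PB that unfolding B_def by auto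
      then show ?thesis unfolding P_def by auto
    qed
    have IH: "measure_pmf.prob (?D B) {g. \<forall>k'\<in>K. \<not> (g (a k') \<and> g (b k'))} = (1 - p^2) ^ card K"
      unfolding B_def using insert by (intro insert.IH) (auto simp: inj_on_def)
    have "measure_pmf.prob (?D P) {f. f (a k) \<and> f (b k)} = measure_pmf.prob (?D P) (Pi P (\<lambda>_. {True}))"
      unfolding P_def Pi_def by (rule arg_cong[where f="measure_pmf.prob _"]) blast
    also have "\<dots> = (\<Prod>x\<in>P. measure_pmf.prob (bernoulli_pmf p) {True})"
      by (rule measure_Pi_pmf_Pi) (simp add: P_def)
    also have "\<dots> = p^2" using ab p unfolding P_def by (simp add: power2_eq_square measure_pmf_single)
    finally have pP: "measure_pmf.prob (?D P) {f. f (a k) \<and> f (b k)} = p^2" .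
    have "measure_pmf.prob (?D P) {f. \<not> (f (a k) \<and> f (b k))} = 1 - measure_pmf.prob (?D P) {f. f (a k) \<and> f (b k)}"
      using measure_pmf.prob_compl[of "{f. f (a k) \<and> f (b k)}" "?D P"] by (simp add: Compl_eq_Diff_UNIV[symmetric] Collect_neg_eq[symmetric])
    with pP have pP': "measure_pmf.prob (?D P) {f. \<not> (f (a k) \<and> f (b k))} = 1 - p^2" by simp
    show ?case
      unfolding eq D measure_map_pmf pre prob_pair_product IH pP' using insert by simp
  qed
  have prob_sub_index:
    "measure_pmf.prob (Pi_pmf A False P) E = measure_pmf.prob (Pi_pmf A' False P) E"
    if "finite A" "A' \<subseteq> A" "\<And>t t'. (\<forall>x\<in>A'. t x = t' x) \<Longrightarrow> t \<in> E \<longleftrightarrow> t' \<in> E"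
    for A A' :: "(nat \<times> nat) set" and E and P :: "nat \<times> nat \<Rightarrow> bool pmf"
  proof -
    have "Pi_pmf A' False P = map_pmf (\<lambda>f x. if x \<in> A' then f x else False) (Pi_pmf A False P)"
      by (rule Pi_pmf_subset[OF that(1,2)])
    moreover have "(\<lambda>f x. if x \<in> A' then f x else False) -` E = E"
    proof (intro set_eqI)
      fix f
      show "f \<in> (\<lambda>f x. if x \<in> A' then f x else False) -` E \<longleftrightarrow> f \<in> E"
        using that(3)[of "\<lambda>x. if x \<in> A' then f x else False" f] by auto
    qed
    ultimately show ?thesis by simp
  qed
  have prob_F: "measure_pmf.prob (timeliness_dist p n) {t. \<forall>k\<in>{1..<n}-{j}. \<not> (t (0,k) \<and> t (k,j))}
            = (1 - p^2) ^ (n - 2)" if j: "1 \<le> j" "j < n" for j n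
  proof -
    let ?K = "{1..<n}-{j}"
    have "measure_pmf.prob (timeliness_dist p n) {t. \<forall>k\<in>?K. \<not> (t (0,k) \<and> t (k,j))}
       = measure_pmf.prob (Pi_pmf ((\<lambda>k. (0,k)) ` ?K \<union> (\<lambda>k. (k,j)) ` ?K) False (\<lambda>_. bernoulli_pmf p))
            {t. \<forall>k\<in>?K. \<not> (t (0,k) \<and> t (k,j))}"
      unfolding timeliness_dist_def
      proof (rule prob_sub_index)
        show "finite (channels n)"
          by (rule finite_subset[of _ "{..<n}\<times>{..<n}"]) (auto simp: channels_def)
      qed (use j in \<open>auto simp: channels_def\<close>)
    also have "\<dots> = (1 - p^2) ^ card ?K"
      by (rule pair_event) (auto simp: inj_on_def)
    also have "card ?K = n - 2" using j by simp
    finally show ?thesis .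
  qed
  have fail_subset: "{t. \<not> leader_exists n t} \<subseteq> (\<Union>j\<in>{1..<n}. {t. \<forall>k\<in>{1..<n}-{j}. \<not> (t (0,k) \<and> t (k,j))})" if n1: "1 \<le> n" for n
  proof
    fix t assume "t \<in> {t. \<not> leader_exists n t}"
    then obtain j where j: "j < n" "j \<noteq> 0" "(0, j) \<notin> (timely_channels n t)\<^sup>+"
      using n1 unfolding leader_exists_def by auto
    have "\<not> (t (0,k) \<and> t (k,j))" if "k \<in> {1..<n}-{j}" for k
    proof
      assume "t (0,k) \<and> t (k,j)"
      then have "(0,k) \<in> timely_channels n t" "(k,j) \<in> timely_channels n t"
        using that j by (auto simp: timely_channels_def channels_def)
      then have "(0,j) \<in> (timely_channels n t)\<^sup>+" by auto
      with j show False by simp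
    qed
    then show "t \<in> (\<Union>j\<in>{1..<n}. {t. \<forall>k\<in>{1..<n}-{j}. \<not> (t (0,k) \<and> t (k,j))})"
      using j by (intro UN_I[of j]) auto
  qed
  have fail_bound: "1 - measure_pmf.prob (timeliness_dist p n) {t. leader_exists n t} \<le> real (n - 1) * (1 - p^2) ^ (n - 2)" if n: "1 \<le> n" for n
  proof -
    let ?M = "timeliness_dist p n"
    let ?F = "\<lambda>j. {t. \<forall>k\<in>{1..<n}-{j}. \<not> (t (0,k) \<and> t (k,j))}"
    have "1 - measure_pmf.prob ?M {t. leader_exists n t} = measure_pmf.prob ?M {t. \<not> leader_exists n t}"
      using measure_pmf.prob_compl[of "{t. leader_exists n t}" ?M]
      by (simp add: Compl_eq_Diff_UNIV[symmetric] Collect_neg_eq[symmetric])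
    also have "\<dots> \<le> measure_pmf.prob ?M (\<Union>j\<in>{1..<n}. ?F j)"
      by (rule measure_pmf.finite_measure_mono[OF fail_subset[OF n]]) simp
    also have "\<dots> \<le> (\<Sum>j\<in>{1..<n}. measure_pmf.prob ?M (?F j))"
      by (rule measure_pmf.finite_measure_subadditive_finite) auto
    also have "\<dots> = (\<Sum>j\<in>{1..<n}. (1 - p^2) ^ (n - 2))"
      using prob_F by (intro sum.cong) auto
    also have "\<dots> = real (n - 1) * (1 - p^2) ^ (n - 2)" by simp
    finally show ?thesis .
  qed
  define q where "q = 1 - p^2"
  have q: "0 < q" "q < 1" unfolding q_def using assms by (auto simp: power_less_one_iff)
  define c where "c = sqrt q"
  have c: "0 < c" "c < 1" "c * c = q" unfolding c_def using q by auto
  define d where "d = 1 / c - 1"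
  have d: "0 < d" unfolding d_def using c by simp
  define C where "C = 1 + 1 / (d * q^2)"
  have nc: "real n * c ^ n \<le> 1 / d" for n
  proof -
    have "1 + real n * d \<le> (1 + d) ^ n" by (rule Bernoulli_inequality) (use d in simp)
    also have "1 + d = 1 / c" unfolding d_def by simp
    finally have "real n * d \<le> (1/c)^n" by simp
    then have "real n * d * c^n \<le> (1/c)^n * c^n" using c by (intro mult_right_mono) auto
    also have "\<dots> = 1" using c by (simp add: power_one_over field_simps)
    finally have "real n * c ^ n * d \<le> 1" by (simp add: mult_ac)
    then show ?thesis using d by (simp add: field_simps)
  qed
  have "1 - measure_pmf.prob (timeliness_dist p n) {t. leader_exists n t} \<le> C * c ^ n" for n
  proof (cases "n = 0")
    case True
    have "C \<ge> 1" unfolding C_def using d q by simp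
    then show ?thesis using True by (simp add: leader_exists_def)
  next
    case False
    then have n: "1 \<le> n" by simp
    have "1 - measure_pmf.prob (timeliness_dist p n) {t. leader_exists n t} \<le> real (n - 1) * q ^ (n - 2)"
      unfolding q_def using fail_bound[OF n] by simp
    also have "\<dots> \<le> C * c ^ n"
    proof (cases "n = 1")
      case True then show ?thesis using c unfolding C_def using d q by simp
    next
      case False
      then have n2: "n = (n - 2) + 2" using n by simp
      have qq: "q ^ (n - 2) = c ^ n * c ^ n / q ^ 2"
      proof -
        have "q ^ n = q ^ (n - 2) * q ^ 2" by (subst n2) (simp add: power_add power2_eq_square)
        moreover have "q ^ n = c ^ n * c ^ n" using c by (simp flip: power_mult_distrib)
        ultimately show ?thesis using q by (simp add: field_simps)
      qed
      have "real (n - 1) * q ^ (n - 2) \<le> real n * q ^ (n - 2)" using q by (intro mult_right_mono) auto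
      also have "\<dots> = (real n * c ^ n) * c ^ n / q^2" unfolding qq by simp
      also have "\<dots> \<le> (1 / d) * c ^ n / q^2" using nc[of n] c q by (intro divide_right_mono mult_right_mono) auto
      also have "\<dots> \<le> C * c ^ n" unfolding C_def using c d q by (simp add: field_simps)
      finally show ?thesis .
    qed
    finally show ?thesis .
  qed
  then show ?thesis using c by blast
qed

end
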